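(* There exist two $k$-CNF formulae $\phi$ and $\psi$ (for some $k$) such that $\phi$ is satisfiable and $\psi$ is unsatisfiable, but $\phi\sim\psi$, i.e. they cannot be distinguished by the 1-WL test.
   Context: A $k$-CNF formula $\phi=\{C_1,\ldots,C_m\}$ over letters $p_1,\ldots,p_n$ is encoded as a labelled bipartite graph $G_\phi$: constraint nodes $v_1,\ldots,v_m$ (one per clause) labelled $b_i=1-$(number of negative literals in $C_i$); variable nodes $w_1,\ldots,w_n$ (one per letter) all with the same (empty) label; an edge $v_iw_j$ labelled $E_{ij}=1$ if $p_j\in C_i$, $-1$ if $\neg p_j\in C_i$, and no edge if $p_j$ does not occur in $C_i$. The 1-WL colouring of $G_\phi$: initial colours $C^V_0(v)=\mathtt{Colour}^V_0(\text{label}(v))$, $C^W_0(w)=\mathtt{Colour}^W_0(\text{label}(w))$; for $i=1,\ldots,|V\cup W|$, $C^V_i(v)=\mathtt{Colour}^V_i(C^V_{i-1}(v),\{\!\{(C^W_{i-1}(w),E_{vw}) : w\in N(v)\}\!\})$ and $C^W_i(w)=\mathtt{Colour}^W_i(C^W_{i-1}(w),\{\!\{(C^V_{i-1}(v),E_{vw}) : v\in N(w)\}\!\})$, where the $\mathtt{Colour}$ maps are injective into natural numbers not previously used; the output is the final pair of colourings. $\phi\sim\psi$ means that running this procedure on $G_\phi$ and $G_\psi$ gives the same outputs (same colour multisets) for all choices of the injective colouring functions. *)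

theory Defs
  imports Main "HOL-Library.Multiset"
begin

text \<open>Literals over letters p_j (j a natural number): (j, True) is p_j, (j, False) is the
negated letter.\<close>

type_synonym lit = "nat \<times> bool"
type_synonym clause = "lit set"

text \<open>phi is a k-CNF formula over the n letters {0..<n}: finitely many clauses, each with
exactly k literals, only using the given letters, and no letter occurring both positively
and negatively in one clause (so that the edge label of the encoding is well defined).\<close>
definition kcnf :: "nat \<Rightarrow> nat \<Rightarrow> clause set \<Rightarrow> bool" where
  "kcnf k n phi \<longleftrightarrow> finite phi \<and>
     (\<forall>C\<in>phi. card C = k \<and> fst ` C \<subseteq> {..<n} \<and> (\<forall>j. \<not> ((j, True) \<in> C \<and> (j, False) \<in> C)))"

definition satisfiable :: "clause set \<Rightarrow> bool" where
  "satisfiable phi \<longleftrightarrow> (\<exists>a :: nat \<Rightarrow> bool. \<forall>C\<in>phi. \<exists>l\<in>C. a (fst l) = snd l)"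

text \<open>The labelled bipartite graph G_phi: constraint nodes are the clauses, variable
nodes are the letters 0..<n.\<close>

definition clause_label :: "clause \<Rightarrow> int" where
  "clause_label C = 1 - int (card {l \<in> C. snd l = False})"

definition edge_label :: "clause \<Rightarrow> nat \<Rightarrow> int" where
  "edge_label C j = (if (j, True) \<in> C then 1 else if (j, False) \<in> C then -1 else 0)"

definition occurs :: "nat \<Rightarrow> clause \<Rightarrow> bool" where
  "occurs j C \<longleftrightarrow> (j, True) \<in> C \<or> (j, False) \<in> C"

definition nbrV :: "nat \<Rightarrow> clause \<Rightarrow> nat set" where
  "nbrV n C = {j \<in> {..<n}. occurs j C}"

definition nbrW :: "clause set \<Rightarrow> nat \<Rightarrow> clause set" where
  "nbrW phi j = {C \<in> phi. occurs j C}"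

fun wl :: "nat \<Rightarrow> clause set \<Rightarrow> (int \<Rightarrow> nat) \<Rightarrow> (nat \<Rightarrow> nat \<times> (nat \<times> int) multiset \<Rightarrow> nat)
           \<Rightarrow> (unit \<Rightarrow> nat) \<Rightarrow> (nat \<Rightarrow> nat \<times> (nat \<times> int) multiset \<Rightarrow> nat)
           \<Rightarrow> nat \<Rightarrow> (clause \<Rightarrow> nat) \<times> (nat \<Rightarrow> nat)" where
  "wl n phi cV0 cV cW0 cW 0 = (\<lambda>C. cV0 (clause_label C), \<lambda>j. cW0 ())"
| "wl n phi cV0 cV cW0 cW (Suc i) =
     (let (fv, fw) = wl n phi cV0 cV cW0 cW i in
       (\<lambda>C. cV (Suc i) (fv C, image_mset (\<lambda>j. (fw j, edge_label C j)) (mset_set (nbrV n C))),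
        \<lambda>j. cW (Suc i) (fw j, image_mset (\<lambda>C. (fv C, edge_label C j)) (mset_set (nbrW phi j)))))"

text \<open>Output: the multisets of final colours of the constraint nodes and of the variable
nodes, after |V \<union> W| = card phi + n rounds.\<close>
definition wl_output :: "nat \<Rightarrow> clause set \<Rightarrow> (int \<Rightarrow> nat) \<Rightarrow> (nat \<Rightarrow> nat \<times> (nat \<times> int) multiset \<Rightarrow> nat)
           \<Rightarrow> (unit \<Rightarrow> nat) \<Rightarrow> (nat \<Rightarrow> nat \<times> (nat \<times> int) multiset \<Rightarrow> nat)
           \<Rightarrow> nat multiset \<times> nat multiset" where
  "wl_output n phi cV0 cV cW0 cW =
     (let (fv, fw) = wl n phi cV0 cV cW0 cW (card phi + n) in
       (image_mset fv (mset_set phi), image_mset fw (mset_set {..<n})))"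

definition colour_range :: "(int \<Rightarrow> nat) \<Rightarrow> (nat \<Rightarrow> nat \<times> (nat \<times> int) multiset \<Rightarrow> nat)
           \<Rightarrow> (unit \<Rightarrow> nat) \<Rightarrow> (nat \<Rightarrow> nat \<times> (nat \<times> int) multiset \<Rightarrow> nat) \<Rightarrow> nat \<Rightarrow> nat set" where
  "colour_range cV0 cV cW0 cW i =
     (if i = 0 then range cV0 \<union> range cW0 else range (cV i) \<union> range (cW i))"

definition admissible :: "(int \<Rightarrow> nat) \<Rightarrow> (nat \<Rightarrow> nat \<times> (nat \<times> int) multiset \<Rightarrow> nat)
           \<Rightarrow> (unit \<Rightarrow> nat) \<Rightarrow> (nat \<Rightarrow> nat \<times> (nat \<times> int) multiset \<Rightarrow> nat) \<Rightarrow> bool" where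
  "admissible cV0 cV cW0 cW \<longleftrightarrow> inj cV0 \<and> inj cW0 \<and> (\<forall>i\<ge>1. inj (cV i) \<and> inj (cW i)) \<and>
     (\<forall>i\<ge>1. \<forall>j<i. (range (cV i) \<union> range (cW i)) \<inter> colour_range cV0 cV cW0 cW j = {})"

definition wl_equiv :: "nat \<Rightarrow> clause set \<Rightarrow> nat \<Rightarrow> clause set \<Rightarrow> bool" where
  "wl_equiv n phi n' psi \<longleftrightarrow>
     (\<forall>cV0 cV cW0 cW. admissible cV0 cV cW0 cW \<longrightarrow>
        wl_output n phi cV0 cV cW0 cW = wl_output n' psi cV0 cV cW0 cW)"

end

theory Submission
  imports Defs
begin

definition prof :: "int \<Rightarrow> int multiset" where
  "prof l = (if l = 1 then {#1, 1#} else {#-1, -1#})"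

definition QQ :: "(int \<times> int) multiset" where
  "QQ = {#(1,1), (1,1), (-1,-1), (-1,-1)#}"

fun AB :: "(int \<Rightarrow> nat) \<Rightarrow> (nat \<Rightarrow> nat \<times> (nat \<times> int) multiset \<Rightarrow> nat)
           \<Rightarrow> (unit \<Rightarrow> nat) \<Rightarrow> (nat \<Rightarrow> nat \<times> (nat \<times> int) multiset \<Rightarrow> nat)
           \<Rightarrow> nat \<Rightarrow> (int \<Rightarrow> nat) \<times> nat" where
  "AB cV0 cV cW0 cW 0 = (cV0, cW0 ())"
| "AB cV0 cV cW0 cW (Suc i) = (let (A, B) = AB cV0 cV cW0 cW i in
     (\<lambda>l. cV (Suc i) (A l, image_mset (\<lambda>e. (B, e)) (prof l)),
      cW (Suc i) (B, image_mset (\<lambda>(l, e). (A l, e)) QQ)))"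

lemma wl_uniform:
  assumes fin: "finite phi"
    and H1: "\<forall>C\<in>phi. image_mset (edge_label C) (mset_set (nbrV n C)) = prof (clause_label C)"
    and H2: "\<forall>j<n. image_mset (\<lambda>C. (clause_label C, edge_label C j)) (mset_set (nbrW phi j)) = QQ"
  shows "(\<forall>C\<in>phi. fst (wl n phi cV0 cV cW0 cW i) C = fst (AB cV0 cV cW0 cW i) (clause_label C))
     \<and> (\<forall>j<n. snd (wl n phi cV0 cV cW0 cW i) j = snd (AB cV0 cV cW0 cW i))"
proof (induction i)
  case 0
  then show ?case by simp
next
  case (Suc i)
  obtain fv fw where fw: "wl n phi cV0 cV cW0 cW i = (fv, fw)" by (cases "wl n phi cV0 cV cW0 cW i")
  obtain A B where ab: "AB cV0 cV cW0 cW i = (A, B)" by (cases "AB cV0 cV cW0 cW i")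
  have IV: "\<forall>C\<in>phi. fv C = A (clause_label C)" and IW: "\<forall>j<n. fw j = B"
    using Suc fw ab by auto
  have finV: "finite (nbrV n C)" for C unfolding nbrV_def by auto
  have finW: "finite (nbrW phi j)" for j unfolding nbrW_def using fin by auto
  have V: "image_mset (\<lambda>j. (fw j, edge_label C j)) (mset_set (nbrV n C))
       = image_mset (\<lambda>e. (B, e)) (prof (clause_label C))" if "C \<in> phi" for C
  proof -
    have "image_mset (\<lambda>j. (fw j, edge_label C j)) (mset_set (nbrV n C))
        = image_mset (\<lambda>j. (B, edge_label C j)) (mset_set (nbrV n C))"
      by (rule image_mset_cong) (use finV IW in \<open>auto simp: nbrV_def\<close>)
    also have "\<dots> = image_mset (\<lambda>e. (B, e)) (image_mset (edge_label C) (mset_set (nbrV n C)))"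
      by (simp add: multiset.map_comp o_def)
    finally show ?thesis using H1 that by simp
  qed
  have W: "image_mset (\<lambda>C. (fv C, edge_label C j)) (mset_set (nbrW phi j))
       = image_mset (\<lambda>(l, e). (A l, e)) QQ" if "j < n" for j
  proof -
    have "image_mset (\<lambda>C. (fv C, edge_label C j)) (mset_set (nbrW phi j))
        = image_mset (\<lambda>C. (A (clause_label C), edge_label C j)) (mset_set (nbrW phi j))"
      by (rule image_mset_cong) (use finW IV in \<open>auto simp: nbrW_def\<close>)
    also have "\<dots> = image_mset (\<lambda>(l, e). (A l, e)) (image_mset (\<lambda>C. (clause_label C, edge_label C j)) (mset_set (nbrW phi j)))"
      by (simp add: multiset.map_comp o_def)
    finally show ?thesis using H2 that by simp
  qed
  show ?case using V W IV IW fw ab by simp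
qed

lemma wl_output_uniform:
  assumes fin: "finite phi"
    and H1: "\<forall>C\<in>phi. image_mset (edge_label C) (mset_set (nbrV n C)) = prof (clause_label C)"
    and H2: "\<forall>j<n. image_mset (\<lambda>C. (clause_label C, edge_label C j)) (mset_set (nbrW phi j)) = QQ"
  shows "wl_output n phi cV0 cV cW0 cW =
     (image_mset (fst (AB cV0 cV cW0 cW (card phi + n))) (image_mset clause_label (mset_set phi)),
      image_mset (\<lambda>_. snd (AB cV0 cV cW0 cW (card phi + n))) (mset_set {..<n}))"
proof -
  let ?N = "card phi + n"
  obtain fv fw where fw: "wl n phi cV0 cV cW0 cW ?N = (fv, fw)" by (cases "wl n phi cV0 cV cW0 cW ?N")
  from wl_uniform[OF assms, of cV0 cV cW0 cW ?N] fw
  have IV: "\<forall>C\<in>phi. fv C = fst (AB cV0 cV cW0 cW ?N) (clause_label C)"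
    and IW: "\<forall>j<n. fw j = snd (AB cV0 cV cW0 cW ?N)" by auto
  have 1: "image_mset fv (mset_set phi) = image_mset (fst (AB cV0 cV cW0 cW ?N)) (image_mset clause_label (mset_set phi))"
    by (simp add: multiset.map_comp o_def) (rule image_mset_cong, use IV fin in auto)
  have 2: "image_mset fw (mset_set {..<n}) = image_mset (\<lambda>_. snd (AB cV0 cV cW0 cW ?N)) (mset_set {..<n})"
    by (rule image_mset_cong) (use IW in auto)
  show ?thesis unfolding wl_output_def using fw 1 2 by simp
qed

definition P :: "nat \<Rightarrow> nat \<Rightarrow> clause" where "P a b = {(a, True), (b, True)}"
definition N :: "nat \<Rightarrow> nat \<Rightarrow> clause" where "N a b = {(a, False), (b, False)}"

definition phi0 :: "clause set" where
  "phi0 = {P 0 1, P 1 2, P 2 3, P 3 4, P 4 5, P 5 0, N 0 1, N 1 2, N 2 3, N 3 4, N 4 5, N 5 0}"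
definition psi0 :: "clause set" where
  "psi0 = {P 0 1, P 1 2, P 2 0, P 3 4, P 4 5, P 5 3, N 0 1, N 1 2, N 2 0, N 3 4, N 4 5, N 5 3}"

lemma sat_phi0: "satisfiable phi0"
  unfolding satisfiable_def phi0_def P_def N_def
  by (rule exI[of _ "\<lambda>j. even j"]) auto

lemma unsat_psi0: "\<not> satisfiable psi0"
  unfolding satisfiable_def psi0_def P_def N_def
  by auto


definition L1 :: "clause list" where
  "L1 = [P 0 1, P 1 2, P 2 3, P 3 4, P 4 5, P 5 0, N 0 1, N 1 2, N 2 3, N 3 4, N 4 5, N 5 0]"
definition L2 :: "clause list" where
  "L2 = [P 0 1, P 1 2, P 2 0, P 3 4, P 4 5, P 5 3, N 0 1, N 1 2, N 2 0, N 3 4, N 4 5, N 5 3]"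

lemma phi0_L: "phi0 = set L1" unfolding phi0_def L1_def by simp
lemma psi0_L: "psi0 = set L2" unfolding psi0_def L2_def by simp

lemma dist1: "distinct L1" unfolding L1_def P_def N_def by (simp add: doubleton_eq_iff)
lemma dist2: "distinct L2" unfolding L2_def P_def N_def by (simp add: doubleton_eq_iff)

lemma mset_filter: "distinct L \<Longrightarrow> mset_set {C \<in> set L. Q C} = mset (filter Q L)"
  by (metis distinct_filter mset_set_set set_filter)

lemma nbrW_L: "distinct L \<Longrightarrow> mset_set (nbrW (set L) j) = mset (filter (occurs j) L)"
  unfolding nbrW_def by (rule mset_filter)

lemma occ_P: "occurs j (P a b) \<longleftrightarrow> j = a \<or> j = b" unfolding occurs_def P_def by auto
lemma occ_N: "occurs j (N a b) \<longleftrightarrow> j = a \<or> j = b" unfolding occurs_def N_def by auto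
lemma lab_P: "a \<noteq> b \<Longrightarrow> clause_label (P a b) = 1"
proof -
  have "{l \<in> P a b. snd l = False} = {}" unfolding P_def by auto
  then show ?thesis unfolding clause_label_def by (simp only:) simp
qed
lemma lab_N: "a \<noteq> b \<Longrightarrow> clause_label (N a b) = -1"
proof -
  assume "a \<noteq> b"
  have "{l \<in> N a b. snd l = False} = N a b" unfolding N_def by auto
  then show ?thesis unfolding clause_label_def N_def using \<open>a \<noteq> b\<close> by simp
qed
lemma el_P: "edge_label (P a b) j = (if j = a \<or> j = b then 1 else 0)"
  unfolding edge_label_def P_def by auto
lemma el_N: "edge_label (N a b) j = (if j = a \<or> j = b then -1 else 0)"
  unfolding edge_label_def N_def by auto
lemma nbrV_P: "a < n \<Longrightarrow> b < n \<Longrightarrow> nbrV n (P a b) = {a, b}"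
  unfolding nbrV_def occ_P by auto
lemma nbrV_N: "a < n \<Longrightarrow> b < n \<Longrightarrow> nbrV n (N a b) = {a, b}"
  unfolding nbrV_def occ_N by auto
lemma H1_P: "a < n \<Longrightarrow> b < n \<Longrightarrow> a \<noteq> b \<Longrightarrow>
   image_mset (edge_label (P a b)) (mset_set (nbrV n (P a b))) = prof (clause_label (P a b))"
  by (simp add: nbrV_P lab_P el_P prof_def)
lemma H1_N: "a < n \<Longrightarrow> b < n \<Longrightarrow> a \<noteq> b \<Longrightarrow>
   image_mset (edge_label (N a b)) (mset_set (nbrV n (N a b))) = prof (clause_label (N a b))"
  by (simp add: nbrV_N lab_N el_N prof_def)

lemma j6: "(j::nat) < 6 \<longleftrightarrow> j = 0 \<or> j = 1 \<or> j = 2 \<or> j = 3 \<or> j = 4 \<or> j = 5" by auto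

lemma H2_1: "\<forall>j<6. image_mset (\<lambda>C. (clause_label C, edge_label C j)) (mset_set (nbrW phi0 j)) = QQ"
  unfolding phi0_L nbrW_L[OF dist1] j6
  by (simp add: L1_def occ_P occ_N lab_P lab_N el_P el_N QQ_def)
lemma H2_2: "\<forall>j<6. image_mset (\<lambda>C. (clause_label C, edge_label C j)) (mset_set (nbrW psi0 j)) = QQ"
  unfolding psi0_L nbrW_L[OF dist2] j6
  by (simp add: L2_def occ_P occ_N lab_P lab_N el_P el_N QQ_def)
lemma H1_1: "\<forall>C\<in>phi0. image_mset (edge_label C) (mset_set (nbrV 6 C)) = prof (clause_label C)"
  unfolding phi0_def by (simp add: H1_P H1_N)
lemma H1_2: "\<forall>C\<in>psi0. image_mset (edge_label C) (mset_set (nbrV 6 C)) = prof (clause_label C)"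
  unfolding psi0_def by (simp add: H1_P H1_N)

lemma labs_1: "image_mset clause_label (mset_set phi0) = mset (map clause_label L1)"
  unfolding phi0_L mset_set_set[OF dist1] by simp
lemma labs_2: "image_mset clause_label (mset_set psi0) = mset (map clause_label L2)"
  unfolding psi0_L mset_set_set[OF dist2] by simp
lemma labs_eq: "image_mset clause_label (mset_set phi0) = image_mset clause_label (mset_set psi0)"
  unfolding labs_1 labs_2 by (simp add: L1_def L2_def lab_P lab_N)
lemma card_eq: "card phi0 = card psi0"
  unfolding phi0_L psi0_L using dist1 dist2 by (simp add: distinct_card L1_def L2_def)

lemma kcnf_P: "a < n \<Longrightarrow> b < n \<Longrightarrow> a \<noteq> b \<Longrightarrow> card (P a b) = 2 \<and> fst ` (P a b) \<subseteq> {..<n}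
   \<and> (\<forall>j. \<not> ((j, True) \<in> P a b \<and> (j, False) \<in> P a b))"
  unfolding P_def by auto
lemma kcnf_N: "a < n \<Longrightarrow> b < n \<Longrightarrow> a \<noteq> b \<Longrightarrow> card (N a b) = 2 \<and> fst ` (N a b) \<subseteq> {..<n}
   \<and> (\<forall>j. \<not> ((j, True) \<in> N a b \<and> (j, False) \<in> N a b))"
  unfolding N_def by auto
lemma kcnf1: "kcnf 2 6 phi0" unfolding kcnf_def phi0_def P_def N_def by auto
lemma kcnf2: "kcnf 2 6 psi0" unfolding kcnf_def psi0_def P_def N_def by auto

lemma fin1: "finite phi0" unfolding phi0_def by simp
lemma fin2: "finite psi0" unfolding psi0_def by simp

lemma equiv: "wl_equiv 6 phi0 6 psi0"
  unfolding wl_equiv_def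
  by (simp add: wl_output_uniform[OF fin1 H1_1 H2_1] wl_output_uniform[OF fin2 H1_2 H2_2]
      card_eq labs_eq)

theorem proposition6:
  shows "\<exists>k n phi n' psi. kcnf k n phi \<and> kcnf k n' psi \<and>
           satisfiable phi \<and> \<not> satisfiable psi \<and> wl_equiv n phi n' psi"
  using kcnf1 kcnf2 sat_phi0 unsat_psi0 equiv by blast

end
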